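(* Suppose that a concave kite central configuration of the planar Newtonian 4-body problem has two pairs of equal masses, with mass values $1$ and $m>0$. Then one pair of equal masses lies at the endpoints of the base of an isosceles triangle, and the other pair lies on the symmetry axis of the base, with one body of this pair inside the triangle formed by the other three bodies.
   Context: Bodies with positive masses $m_i$ at positions $q_i\in\mathbb{R}^2$, $i=1,\dots,4$, with $r_{ij}=|q_i-q_j|$. A configuration is a central configuration if there is a constant $\lambda$ with $-\lambda m_j(q_j-c)=\sum_{i\neq j} m_im_j(q_i-q_j)/r_{ij}^3$ for all $j$, where $c=\sum m_iq_i/\sum m_i$. A non-collinear configuration is a kite if it has a symmetry axis passing through two of the four bodies; it is concave if one body lies inside the triangle formed by the other three. *)

theory Defs
  imports "HOL-Analysis.Analysis"
begin

definition center_of_mass :: "(nat \<Rightarrow> real) \<Rightarrow> (nat \<Rightarrow> complex) \<Rightarrow> complex" where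
  "center_of_mass m q = (1 / (\<Sum>i<4. m i)) *\<^sub>R (\<Sum>i<4. m i *\<^sub>R q i)"

definition central_configuration :: "(nat \<Rightarrow> real) \<Rightarrow> (nat \<Rightarrow> complex) \<Rightarrow> bool" where
  "central_configuration m q \<longleftrightarrow>
     (\<forall>i<4. \<forall>j<4. i \<noteq> j \<longrightarrow> q i \<noteq> q j) \<and>
     (\<exists>lam::real. \<forall>j<4.
        - (lam * m j) *\<^sub>R (q j - center_of_mass m q) =
        (\<Sum>i\<in>{..<4} - {j}. (m i * m j / (cmod (q i - q j)) ^ 3) *\<^sub>R (q i - q j)))"

definition reflect_line :: "complex \<Rightarrow> complex \<Rightarrow> complex \<Rightarrow> complex" where
  "reflect_line a b z = a + (b - a) * cnj ((z - a) / (b - a))"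

definition is_kite :: "(nat \<Rightarrow> complex) \<Rightarrow> bool" where
  "is_kite q \<longleftrightarrow> \<not> collinear (q ` {..<4}) \<and>
     (\<exists>a<4. \<exists>b<4. a \<noteq> b \<and> q a \<noteq> q b \<and>
        reflect_line (q a) (q b) ` (q ` {..<4}) = q ` {..<4})"

definition is_concave :: "(nat \<Rightarrow> complex) \<Rightarrow> bool" where
  "is_concave q \<longleftrightarrow> (\<exists>i<4. q i \<in> interior (convex hull (q ` ({..<4} - {i}))))"

end

theory Submission
  imports Defs
begin

lemma hull_bound:
  fixes S :: "complex set"
  assumes "\<forall>x\<in>S. Re ((x - z0) * \<alpha>) \<le> r" "y \<in> convex hull S"
  shows "Re ((y - z0) * \<alpha>) \<le> r"
proof -
  have cv: "convex {y. Re ((y - z0) * \<alpha>) \<le> r}"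
  proof (rule convexI)
    fix x y :: complex and s v :: real
    assume x: "x \<in> {y. Re ((y - z0) * \<alpha>) \<le> r}" and y: "y \<in> {y. Re ((y - z0) * \<alpha>) \<le> r}"
      and s: "0 \<le> s" and v: "0 \<le> v" and sv: "s + v = 1"
    have "s *\<^sub>R x + v *\<^sub>R y - z0 = s *\<^sub>R (x - z0) + v *\<^sub>R (y - z0)"
    proof -
      have e: "s *\<^sub>R z0 + v *\<^sub>R z0 = z0" using sv by (simp add: scaleR_add_left[symmetric])
      have "s *\<^sub>R x + v *\<^sub>R y - z0 = s *\<^sub>R x + v *\<^sub>R y - (s *\<^sub>R z0 + v *\<^sub>R z0)"
        by (simp only: e)
      also have "\<dots> = s *\<^sub>R (x - z0) + v *\<^sub>R (y - z0)" by (simp add: algebra_simps)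
      finally show ?thesis .
    qed
    hence "Re ((s *\<^sub>R x + v *\<^sub>R y - z0) * \<alpha>) = s * Re ((x - z0) * \<alpha>) + v * Re ((y - z0) * \<alpha>)"
      by (simp add: scaleR_conv_of_real distrib_right mult.assoc)
    also have "\<dots> \<le> s * r + v * r"
      using x y s v by (intro add_mono mult_left_mono) auto
    also have "\<dots> = r" using sv by (metis distrib_right mult_1)
    finally show "s *\<^sub>R x + v *\<^sub>R y \<in> {y. Re ((y - z0) * \<alpha>) \<le> r}" by simp
  qed
  have "convex hull S \<subseteq> {y. Re ((y - z0) * \<alpha>) \<le> r}"
    by (rule hull_minimal) (use assms(1) cv in auto)
  thus ?thesis using assms(2) by auto
qed

lemma collinear_of_real_coords:
  fixes S :: "complex set"
  assumes u: "u \<noteq> 0" and h: "\<forall>x\<in>S. Im ((x - p) / u) = 0"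
  shows "collinear S"
  unfolding collinear_def
proof (rule exI[of _ u], intro ballI)
  fix x y assume x: "x \<in> S" and y: "y \<in> S"
  have "(x - p) / u - (y - p) / u = of_real (Re ((x - p) / u) - Re ((y - p) / u))"
    using h x y by (simp add: complex_eq_iff)
  moreover have "x - y = u * ((x - p) / u - (y - p) / u)" using u by (simp add: field_simps)
  ultimately have "x - y = (Re ((x - p) / u) - Re ((y - p) / u)) *\<^sub>R u"
    by (simp add: scaleR_conv_of_real mult.commute)
  thus "\<exists>c. x - y = c *\<^sub>R u" by blast
qed

lemma other_two:
  fixes a b :: nat
  assumes "a < 4" "b < 4" "a \<noteq> b"
  shows "\<exists>c d. c < 4 \<and> d < 4 \<and> distinct [a, b, c, d]"
proof -
  have "card ({..<4::nat} - {a, b}) = 2" using assms by (simp add: card_Diff_subset)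
  then obtain c d where "{..<4::nat} - {a, b} = {c, d}" "c \<noteq> d" by (auto simp: card_2_iff)
  thus ?thesis using assms by (intro exI[of _ c] exI[of _ d]) (auto dest!: equalityD2)
qed

lemma four_univ:
  fixes a b c d :: nat
  assumes "a < 4" "b < 4" "c < 4" "d < 4" "distinct [a, b, c, d]"
  shows "{..<4} = {a, b, c, d}"
proof -
  have "{a, b, c, d} \<subseteq> {..<4::nat}" using assms by auto
  moreover have "card {a, b, c, d} = card {..<4::nat}" using assms(5) by simp
  ultimately show ?thesis by (metis card_subset_eq finite_lessThan)
qed


lemma mass_pairs:
  fixes m :: "nat \<Rightarrow> real"
  assumes "a < 4" "b < 4" "c < 4" "d < 4" "distinct [a, b, c, d]"
    and "a' < 4" "b' < 4" "c' < 4" "d' < 4" "distinct [a', b', c', d']"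
    and "m a' = 1" "m b' = 1" "m c' = \<mu>" "m d' = \<mu>" "m c = m d"
  shows "m a = m b"
proof -
  have U: "{..<4} = {a', b', c', d'}" using four_univ assms(6-10) by blast
  have "a \<in> {a', b', c', d'}" "b \<in> {a', b', c', d'}" "c \<in> {a', b', c', d'}" "d \<in> {a', b', c', d'}"
    using assms(1-4) U by auto
  thus ?thesis using assms(5,10-15) by auto
qed

lemma Im_scaleR_div: "Im ((r *\<^sub>R x) / u) = r * Im (x / u)"
proof -
  have "(r *\<^sub>R x) / u = of_real r * (x / u)" by (simp add: scaleR_conv_of_real)
  moreover have "Im (of_real r * w) = r * Im w" for w :: complex by simp
  ultimately show ?thesis by metis
qed

lemma Im_add_div: "Im ((x + y) / u) = Im (x / u) + Im (y / u)"
  by (simp add: add_divide_distrib)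


theorem proposition1:
  fixes m :: "nat \<Rightarrow> real" and q :: "nat \<Rightarrow> complex" and \<mu> :: real
  assumes mu_pos: "\<mu> > 0"
    and masses: "\<exists>a<4. \<exists>b<4. \<exists>c<4. \<exists>d<4. distinct [a, b, c, d] \<and>
                   m a = 1 \<and> m b = 1 \<and> m c = \<mu> \<and> m d = \<mu>"
    and cc: "central_configuration m q"
    and kite: "is_kite q"
    and concave: "is_concave q"
  shows "\<exists>i<4. \<exists>j<4. \<exists>k<4. \<exists>l<4. distinct [i, j, k, l] \<and>
           m i = m j \<and> m k = m l \<and>
           dist (q k) (q i) = dist (q k) (q j) \<and>
           dist (q l) (q i) = dist (q l) (q j) \<and>
           q l \<in> interior (convex hull {q i, q j, q k})"
proof -
  have ncol: "\<not> collinear (q ` {..<4})" using kite unfolding is_kite_def by blast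
  obtain a b where a: "a < 4" and b: "b < 4" and ab: "a \<noteq> b"
    and refl: "reflect_line (q a) (q b) ` (q ` {..<4}) = q ` {..<4}"
    using kite unfolding is_kite_def by blast
  obtain c d where c: "c < 4" and d: "d < 4" and dst: "distinct [a, b, c, d]"
    using other_two[OF a b ab] by blast
  have U: "{..<4} = {a, b, c, d}" using four_univ[OF a b c d dst] .
  have QS: "q ` {..<4} = {q a, q b, q c, q d}" using U by simp
  have qdist: "\<And>i j. i < 4 \<Longrightarrow> j < 4 \<Longrightarrow> i \<noteq> j \<Longrightarrow> q i \<noteq> q j"
    using cc unfolding central_configuration_def by blast
  have qab: "q a \<noteq> q b" and qac: "q a \<noteq> q c" and qad: "q a \<noteq> q d"
    and qbc: "q b \<noteq> q c" and qbd: "q b \<noteq> q d" and qcd: "q c \<noteq> q d"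
    using qdist a b c d dst by auto
  define u where "u = q b - q a"
  have u0: "u \<noteq> 0" using qab by (simp add: u_def)
  define \<rho> where "\<rho> = reflect_line (q a) (q b)"
  have \<rho>_eq: "\<rho> x = q a + u * cnj ((x - q a) / u)" for x
    by (simp add: \<rho>_def reflect_line_def u_def)
  have \<rho>\<rho>: "\<rho> (\<rho> x) = x" for x using u0 by (simp add: \<rho>_eq)
  have \<rho>a: "\<rho> (q a) = q a" by (simp add: \<rho>_eq)
  have \<rho>b: "\<rho> (q b) = q b" using u0 by (simp add: \<rho>_eq u_def)
  have \<rho>fix: "Im ((x - q a) / u) = 0" if "\<rho> x = x" for x
  proof -
    define w where "w = (x - q a) / u"
    have "q a + u * cnj w = x" using that unfolding \<rho>_eq w_def .
    hence "u * cnj w = x - q a" by (metis add_diff_cancel_left')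
    also have "\<dots> = u * w" using u0 by (simp add: w_def)
    finally have "cnj w = w" using u0 by simp
    hence "cnj ((x - q a) / u) = (x - q a) / u" by (simp only: w_def)
    thus ?thesis by (metis complex_cnj_cancel_iff complex_is_Real_iff Reals_cnj_iff)
  qed
  have \<rho>in: "\<rho> x \<in> {q a, q b, q c, q d}" if "x \<in> {q a, q b, q c, q d}" for x
    using refl QS that unfolding \<rho>_def by blast
  have \<rho>c: "\<rho> (q c) = q d"
  proof -
    have "\<rho> (q c) \<in> {q a, q b, q c, q d}" using \<rho>in by simp
    moreover have "\<rho> (q c) \<noteq> q a" using \<rho>\<rho>[of "q c"] \<rho>a qac by metis
    moreover have "\<rho> (q c) \<noteq> q b" using \<rho>\<rho>[of "q c"] \<rho>b qbc by metis
    moreover have "\<rho> (q c) \<noteq> q c"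
    proof
      assume cc': "\<rho> (q c) = q c"
      have "\<rho> (q d) \<in> {q a, q b, q c, q d}" using \<rho>in by simp
      moreover have "\<rho> (q d) \<noteq> q a" using \<rho>\<rho>[of "q d"] \<rho>a qad by metis
      moreover have "\<rho> (q d) \<noteq> q b" using \<rho>\<rho>[of "q d"] \<rho>b qbd by metis
      moreover have "\<rho> (q d) \<noteq> q c" using \<rho>\<rho>[of "q d"] cc' qcd by metis
      ultimately have dd: "\<rho> (q d) = q d" by blast
      have "collinear {q a, q b, q c, q d}"
        apply (rule collinear_of_real_coords[OF u0, of _ "q a"])
        using \<rho>fix[OF cc'] \<rho>fix[OF dd] u0 by (auto simp: u_def)
      thus False using ncol QS by simp
    qed
    ultimately show ?thesis by blast
  qed
  define z where "z = (q c - q a) / u"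
  have qc_eq: "q c = q a + u * z" using u0 by (simp add: z_def)
  have qd_eq: "q d = q a + u * cnj z" using \<rho>c by (simp add: \<rho>_eq z_def)
  have qb_eq: "q b = q a + u" by (simp add: u_def)
  have t0: "Im z \<noteq> 0"
  proof
    assume "Im z = 0"
    hence "cnj z = z" by (simp add: complex_eq_iff)
    thus False using qc_eq qd_eq qcd by simp
  qed
  have rac: "cmod (q c - q a) = cmod u * cmod z" by (simp add: qc_eq norm_mult)
  have rad: "cmod (q d - q a) = cmod u * cmod z" by (simp add: qd_eq norm_mult)
  have rbc: "cmod (q c - q b) = cmod u * cmod (z - 1)"
  proof -
    have "q c - q b = u * (z - 1)" by (simp add: qc_eq qb_eq algebra_simps)
    thus ?thesis by (simp add: norm_mult)
  qed
  have rbd: "cmod (q d - q b) = cmod u * cmod (z - 1)"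
  proof -
    have "q d - q b = u * cnj (z - 1)" by (simp add: qd_eq qb_eq algebra_simps)
    thus ?thesis by (simp add: norm_mult del: complex_cnj_diff)
  qed
  obtain a' b' c' d' where a': "a' < 4" and b': "b' < 4" and c': "c' < 4" and d': "d' < 4"
    and dst': "distinct [a', b', c', d']" and ma': "m a' = 1" and mb': "m b' = 1"
    and mc': "m c' = \<mu>" and md': "m d' = \<mu>"
    using masses by blast
  have pos: "m x > 0" if "x < 4" for x
  proof -
    have "x \<in> {a', b', c', d'}" using four_univ[OF a' b' c' d' dst'] that by blast
    thus ?thesis using ma' mb' mc' md' mu_pos by auto
  qed
  have ma: "m a > 0" and mb: "m b > 0" using pos a b by auto
  define cm where "cm = center_of_mass m q"
  obtain lam where E: "\<forall>j<4. - (lam * m j) *\<^sub>R (q j - cm) =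
        (\<Sum>i\<in>{..<4} - {j}. (m i * m j / (cmod (q i - q j)) ^ 3) *\<^sub>R (q i - q j))"
    using cc unfolding central_configuration_def cm_def by blast
  have Da: "{..<4} - {a} = {b, c, d}" using U dst by auto
  have Db: "{..<4} - {b} = {a, c, d}" using U dst by auto
  have Ea: "- (lam * m a) *\<^sub>R (q a - cm) = (m b * m a / (cmod (q b - q a)) ^ 3) *\<^sub>R (q b - q a)
      + ((m c * m a / (cmod (q c - q a)) ^ 3) *\<^sub>R (q c - q a)
      + (m d * m a / (cmod (q d - q a)) ^ 3) *\<^sub>R (q d - q a))"
    using E[rule_format, OF a] dst unfolding Da by simp
  have Eb: "- (lam * m b) *\<^sub>R (q b - cm) = (m a * m b / (cmod (q a - q b)) ^ 3) *\<^sub>R (q a - q b)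
      + ((m c * m b / (cmod (q c - q b)) ^ 3) *\<^sub>R (q c - q b)
      + (m d * m b / (cmod (q d - q b)) ^ 3) *\<^sub>R (q d - q b))"
    using E[rule_format, OF b] dst unfolding Db by simp
  have Iba: "Im ((q b - q a) / u) = 0" using u0 by (simp add: u_def)
  have Iab: "Im ((q a - q b) / u) = 0"
  proof -
    have "q a - q b = - u" by (simp add: u_def)
    thus ?thesis using u0 by simp
  qed
  have Ica: "Im ((q c - q a) / u) = Im z" by (simp add: z_def)
  have Ida: "Im ((q d - q a) / u) = - Im z" using u0 by (simp add: qd_eq)
  have Icb: "Im ((q c - q b) / u) = Im z"
  proof -
    have "(q c - q b) / u = z - 1" using u0 by (simp add: qc_eq qb_eq field_simps)
    thus ?thesis by simp
  qed
  have Idb: "Im ((q d - q b) / u) = - Im z"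
  proof -
    have "(q d - q b) / u = cnj z - 1" using u0 by (simp add: qd_eq qb_eq field_simps)
    thus ?thesis by simp
  qed
  have Icm: "Im ((q b - cm) / u) = Im ((q a - cm) / u)"
  proof -
    have "(q b - cm) / u = (q a - cm) / u + 1" using u0 by (simp add: qb_eq field_simps)
    thus ?thesis by simp
  qed
  define P where "P = Im ((q a - cm) / u)"
  define A where "A = (cmod u * cmod z) ^ 3"
  define B where "B = (cmod u * cmod (z - 1)) ^ 3"
  have EA: "- (lam * m a) * P = m c * m a / A * Im z - m d * m a / A * Im z"
    using arg_cong[OF Ea, of "\<lambda>x. Im (x / u)"]
    unfolding Im_add_div Im_scaleR_div Iba Ica Ida rac rad P_def A_def by simp
  have EB: "- (lam * m b) * P = m c * m b / B * Im z - m d * m b / B * Im z"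
    using arg_cong[OF Eb, of "\<lambda>x. Im (x / u)"]
    unfolding Im_add_div Im_scaleR_div Iab Icb Idb rbc rbd Icm P_def B_def by simp
  have "z \<noteq> 0" using t0 by auto
  have "z - 1 \<noteq> 0" using t0 by auto
  have Apos: "A > 0" using u0 \<open>z \<noteq> 0\<close> by (simp add: A_def)
  have Bpos: "B > 0" using u0 \<open>z - 1 \<noteq> 0\<close> by (simp add: B_def)
  have "m a * (- lam * P) = m a * ((m c - m d) * Im z / A)"
    using EA Apos by (simp add: field_simps)
  hence EA': "- lam * P = (m c - m d) * Im z / A"
    using ma by (metis mult_cancel_left less_irrefl)
  have "m b * (- lam * P) = m b * ((m c - m d) * Im z / B)"
    using EB Bpos by (simp add: field_simps)
  hence EB': "- lam * P = (m c - m d) * Im z / B"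
    using mb by (metis mult_cancel_left less_irrefl)
  have key: "m c = m d \<or> Re z = 1 / 2"
  proof (cases "m c = m d")
    case True
    thus ?thesis by simp
  next
    case False
    note ne = False
    have "(m c - m d) * Im z \<noteq> 0" using ne t0 by simp
    moreover have "(m c - m d) * Im z / A = (m c - m d) * Im z / B" using EA' EB' by simp
    ultimately have "A = B" by (simp add: divide_cancel_left)
    hence "cmod u * cmod z = cmod u * cmod (z - 1)"
      unfolding A_def B_def by (simp add: power_eq_iff_eq_base)
    hence "cmod z = cmod (z - 1)" using u0 by simp
    hence "cmod z ^ 2 = cmod (z - 1) ^ 2" by simp
    hence "Re z ^ 2 = (Re z - 1) ^ 2" by (simp add: cmod_power2)
    hence "Re z = 1 / 2" by (simp add: power2_eq_square algebra_simps)
    thus ?thesis by simp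
  qed
  obtain i where i: "i < 4" and iin: "q i \<in> interior (convex hull (q ` ({..<4} - {i})))"
    using concave unfolding is_concave_def by blast
  have ih: "q i \<in> convex hull (q ` ({..<4} - {i}))" using iin interior_subset by blast
  have Rdiv: "Re (w * (- \<i> / u)) = Im (w / u)" for w
  proof -
    have "w * (- \<i> / u) = - \<i> * (w / u)" by simp
    moreover have "Re (- \<i> * v) = Im v" for v by simp
    ultimately show ?thesis by metis
  qed
  have Rdiv2: "Re (w * (\<i> / u)) = - Im (w / u)" for w
  proof -
    have "w * (\<i> / u) = \<i> * (w / u)" by simp
    moreover have "Re (\<i> * v) = - Im v" for v by simp
    ultimately show ?thesis by metis
  qed
  have ic: "i \<noteq> c"
  proof
    assume ic: "i = c"
    have S: "q ` ({..<4} - {i}) = {q a, q b, q d}" using U dst ic by auto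
    show False
    proof (cases "Im z > 0")
      case True
      have "Re ((q c - q a) * (- \<i> / u)) \<le> 0"
        apply (rule hull_bound[of "{q a, q b, q d}"])
        using ih S ic True unfolding Rdiv by (auto simp: Iba Ida)
      thus False using True unfolding Rdiv Ica by simp
    next
      case False
      hence "Im z < 0" using t0 by simp
      have "Re ((q c - q a) * (\<i> / u)) \<le> 0"
        apply (rule hull_bound[of "{q a, q b, q d}"])
        using ih S ic \<open>Im z < 0\<close> unfolding Rdiv2 by (auto simp: Iba Ida)
      thus False using \<open>Im z < 0\<close> unfolding Rdiv2 Ica by simp
    qed
  qed
  have id: "i \<noteq> d"
  proof
    assume id: "i = d"
    have S: "q ` ({..<4} - {i}) = {q a, q b, q c}" using U dst id by auto
    show False
    proof (cases "Im z > 0")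
      case True
      have "Re ((q d - q a) * (\<i> / u)) \<le> 0"
        apply (rule hull_bound[of "{q a, q b, q c}"])
        using ih S id True unfolding Rdiv2 by (auto simp: Iba Ica)
      thus False using True unfolding Rdiv2 Ida by simp
    next
      case False
      hence "Im z < 0" using t0 by simp
      have "Re ((q d - q a) * (- \<i> / u)) \<le> 0"
        apply (rule hull_bound[of "{q a, q b, q c}"])
        using ih S id \<open>Im z < 0\<close> unfolding Rdiv by (auto simp: Iba Ica)
      thus False using \<open>Im z < 0\<close> unfolding Rdiv Ida by simp
    qed
  qed
  have iab: "i = a \<or> i = b" using i U ic id by auto
  have Rba: "Re ((q b - q a) * (1 / u)) = 1" using u0 by (simp add: u_def)
  have Rca: "Re ((q c - q a) * (1 / u)) = Re z" by (simp add: z_def)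
  have Rda: "Re ((q d - q a) * (1 / u)) = Re z" using u0 by (simp add: qd_eq)
  have Rba': "Re ((q b - q a) * (- 1 / u)) = - 1" using u0 by (simp add: u_def)
  have Rca': "Re ((q c - q a) * (- 1 / u)) = - Re z" by (simp add: z_def)
  have Rda': "Re ((q d - q a) * (- 1 / u)) = - Re z" using u0 by (simp add: qd_eq)
  have Rb0: "Re ((q b - q a) / u) = 1" using u0 by (simp add: u_def)
  have Rc0: "Re ((q c - q a) / u) = Re z" by (simp add: z_def)
  have Rd0: "Re ((q d - q a) / u) = Re z" using u0 by (simp add: qd_eq)
  have mcd: "m c = m d"
  proof (rule ccontr)
    assume "m c \<noteq> m d"
    hence hz: "Re z = 1 / 2" using key by blast
    show False
    proof (cases "i = a")
      case True
      have S: "q ` ({..<4} - {i}) = {q b, q c, q d}" using U dst True by auto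
      have "Re ((q a - q a) * (- 1 / u)) \<le> - 1 / 2"
        apply (rule hull_bound[of "{q b, q c, q d}"])
        using ih S True hz by (auto simp: Rb0 Rc0 Rd0)
      thus False by simp
    next
      case False
      hence ib: "i = b" using iab by simp
      have S: "q ` ({..<4} - {i}) = {q a, q c, q d}" using U dst ib by auto
      have "Re ((q b - q a) * (1 / u)) \<le> 1 / 2"
        apply (rule hull_bound[of "{q a, q c, q d}"])
        using ih S ib hz by (auto simp: Rc0 Rd0)
      thus False using Rba by simp
    qed
  qed
  have mab: "m a = m b" using mass_pairs[OF a b c d dst a' b' c' d' dst' ma' mb' mc' md' mcd] .
  have dac: "dist (q a) (q c) = dist (q a) (q d)"
    using rac rad by (simp add: dist_norm norm_minus_commute)
  have dbc: "dist (q b) (q c) = dist (q b) (q d)"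
    using rbc rbd by (simp add: dist_norm norm_minus_commute)
  show ?thesis
  proof (cases "i = a")
    case True
    have S: "q ` ({..<4} - {i}) = {q c, q d, q b}" using U dst True by auto
    show ?thesis
      apply (rule exI[of _ c], simp add: c, rule exI[of _ d], simp add: d,
             rule exI[of _ b], simp add: b, rule exI[of _ a], simp add: a)
      using dst mcd mab dac dbc iin S True by auto
  next
    case False
    hence ib: "i = b" using iab by simp
    have S: "q ` ({..<4} - {i}) = {q c, q d, q a}" using U dst ib by auto
    show ?thesis
      apply (rule exI[of _ c], simp add: c, rule exI[of _ d], simp add: d,
             rule exI[of _ a], simp add: a, rule exI[of _ b], simp add: b)
      using dst mcd mab dac dbc iin S ib by auto
  qed
qed

end
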